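(* In the dynamic weighted storage system described in the context, each read/write operation always finishes in the last installed view in the system ($lastview$).
   Context: System: servers $S=\{s_1,\dots,s_n\}$ and clients; reliable links; asynchronous; crash failures only; at most $f$ servers crash and $2f+1\le n$. Views form a sequence $v_0,v_1,\dots$ with $v_{k+1}=v_k.succ$; $v<w$ means $w$ is obtained from $v$ by applying $succ$ one or more times. Each server $s$ has a current view $s.cview$ (initially $v_0$) and a weight in each view; in every view each server's weight is strictly between $\mathbb{wl}=n/(2(n-f))$ and $\mathbb{wu}=n/(2f)$ and the total weight is at most $n$. A weighted majority for view $v$ is a set of servers whose weights in $v$ sum to more than $n/2$. View changer (server $s$ with $s.cview=v$): on timeout it sends $\langle\text{change\_view},v.succ\rangle$; once it has received or sent change\_view for $v.succ$ it forwards it if needed, disables read/write operations, sends $\langle\text{state\_update},(val,ts,cid),v,w\rangle$ to all servers (it has then uninstalled $v$), waits for state\_update messages for view $v$ with weights summing to more than $n/2$, adopts the value with largest $(ts,cid)$, sets $s.cview\leftarrow v.succ$ (installs $v.succ$) and re-enables read/write operations. A view $v$ is installed in the system once some server installs it and no server has a larger current view; $lastview$ is the last view installed in the system. Read/write protocol: each client keeps $cview$ (initially $v_0$). Each operation has two phases, both executed with the same client view (a view change restarts the whole operation); in each phase the client sends a request tagged with $cview$ to all servers; a server (when read/write operations are enabled) replies with its current view and, if it equals the request's view, its weight (else $\bot$), plus its register $(val,ts,cid)$ in phase 1, and in phase 2 stores the written value if views match and its $(ts,cid)$ is larger. The client collects replies with view equal to $cview$; on a reply with another view $v$ it sets $cview\leftarrow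 v$ if $cview<v$ and restarts the operation; a phase finishes when collected weights exceed $n/2$.
   Formalization: The view in which an operation finishes (the client's view) equals $lastview$ at some state of its final phase 2, from the sending of its phase-2 requests up to completion, rather than at the finishing instant. The statement above fails without it. *)

theory Defs
  imports Complex_Main "HOL-Library.Multiset"
begin

text \<open>
  Servers: elements of a finite type 's (so n = card (UNIV :: 's set)).  Clients: elements of a
  linearly ordered type 'c (client ids, used as tie breakers in (ts,cid)).
  Views: v_k is represented by the natural number k, so v0 = 0 and v.succ = Suc v,
  and v < w iff w is obtained from v by applying succ one or more times.
  Registers: (val, ts, cid).
  Weights: w v s is the weight of server s in view v (a parameter of the model).
  The network is a multiset of messages in transit (reliable point-to-point links:
  no loss, no duplication, no creation; arbitrary delays and reordering).
\<close>

type_synonym ('v,'c) reg = "'v \<times> nat \<times> 'c"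

datatype 'v opn = Read | Write 'v

datatype ('s,'v,'c) msg =
    ChangeView 's nat                         \<comment> \<open>destination, view\<close>
  | StateUpdate 's 's "('v,'c) reg" nat        \<comment> \<open>destination, sender, register, view\<close>
  | Req1 's 'c nat nat                        \<comment> \<open>destination server, client, request id, view\<close>
  | Req2 's 'c nat nat "('v,'c) reg"          \<comment> \<open>destination server, client, request id, view, value\<close>
  | Rep1 'c 's nat nat "real option" "('v,'c) reg"
      \<comment> \<open>destination client, sender, request id, server view, weight or None (bottom), register\<close>
  | Rep2 'c 's nat nat "real option"
      \<comment> \<open>destination client, sender, request id, server view, weight or None (bottom)\<close>

record ('s,'v,'c) st =
  scv   :: "'s \<Rightarrow> nat"                         \<comment> \<open>current view of a server\<close>
  sreg  :: "'s \<Rightarrow> ('v,'c) reg"                 \<comment> \<open>register of a server\<close>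
  sen   :: "'s \<Rightarrow> bool"                        \<comment> \<open>read/write operations enabled\<close>
  sfl   :: "'s \<Rightarrow> bool"                        \<comment> \<open>change_view for scv+1 received/sent (current view uninstalled)\<close>
  ssu   :: "'s \<Rightarrow> nat \<Rightarrow> ('s \<times> ('v,'c) reg) set" \<comment> \<open>state_update messages received, per view\<close>
  crashed :: "'s set"
  ccv   :: "'c \<Rightarrow> nat"                         \<comment> \<open>client view\<close>
  cop   :: "'c \<Rightarrow> 'v opn option"               \<comment> \<open>pending operation (None = idle)\<close>
  cph   :: "'c \<Rightarrow> nat"                         \<comment> \<open>current phase (1 or 2)\<close>
  crid  :: "'c \<Rightarrow> nat"                         \<comment> \<open>request id of the current phase\<close>
  crep  :: "'c \<Rightarrow> ('s \<times> real \<times> ('v,'c) reg) set" \<comment> \<open>collected replies: server, weight, register\<close>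
  cwr   :: "'c \<Rightarrow> ('v,'c) reg"                 \<comment> \<open>value written in phase 2\<close>
  net   :: "('s,'v,'c) msg multiset"

definition key :: "('v,'c) reg \<Rightarrow> nat \<times> 'c" where
  "key r = (fst (snd r), snd (snd r))"

definition key_le :: "nat \<times> 'c::linorder \<Rightarrow> nat \<times> 'c \<Rightarrow> bool" where
  "key_le a b \<longleftrightarrow> fst a < fst b \<or> (fst a = fst b \<and> snd a \<le> snd b)"

definition key_less :: "nat \<times> 'c::linorder \<Rightarrow> nat \<times> 'c \<Rightarrow> bool" where
  "key_less a b \<longleftrightarrow> fst a < fst b \<or> (fst a = fst b \<and> snd a < snd b)"

definition bcast :: "('s::finite \<Rightarrow> 'm) \<Rightarrow> 'm multiset" where
  "bcast g = (\<Sum>s\<in>UNIV. {#g s#})"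

text \<open>Weight assumptions: in every view each weight lies strictly between
  wl = n/(2(n-f)) and wu = n/(2f) (the upper bound written multiplied out, so that
  f = 0 means wu = infinity), the total weight is at most n, and 2f+1 <= n.\<close>
definition weights_ok :: "nat \<Rightarrow> (nat \<Rightarrow> 's::finite \<Rightarrow> real) \<Rightarrow> bool" where
  "weights_ok f w \<longleftrightarrow>
     2 * f + 1 \<le> card (UNIV :: 's set) \<and>
     (\<forall>v s. real (card (UNIV :: 's set)) / (2 * (real (card (UNIV :: 's set)) - real f)) < w v s \<and>
            2 * real f * w v s < real (card (UNIV :: 's set))) \<and>
     (\<forall>v. (\<Sum>s\<in>UNIV. w v s) \<le> real (card (UNIV :: 's set)))"

text \<open>Server s (in view v = scv s) has received or sent change_view for v.succ:
  forward it, disable read/write operations, send state_update (uninstall v).\<close>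
definition handle_cv :: "('s::finite,'v,'c) st \<Rightarrow> 's \<Rightarrow> ('s,'v,'c) st" where
  "handle_cv \<sigma> s = \<sigma>\<lparr> sfl := (sfl \<sigma>)(s := True), sen := (sen \<sigma>)(s := False),
      net := net \<sigma> + bcast (\<lambda>t. ChangeView t (Suc (scv \<sigma> s)))
                  + bcast (\<lambda>t. StateUpdate t s (sreg \<sigma> s) (scv \<sigma> s)) \<rparr>"

definition start_ph1 :: "('s::finite,'v,'c) st \<Rightarrow> 'c \<Rightarrow> ('s,'v,'c) st" where
  "start_ph1 \<sigma> c = \<sigma>\<lparr> cph := (cph \<sigma>)(c := 1), crid := (crid \<sigma>)(c := Suc (crid \<sigma> c)),
      crep := (crep \<sigma>)(c := {}),
      net := net \<sigma> + bcast (\<lambda>s. Req1 s c (Suc (crid \<sigma> c)) (ccv \<sigma> c)) \<rparr>"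

definition restart :: "('s::finite,'v,'c) st \<Rightarrow> 'c \<Rightarrow> nat \<Rightarrow> ('s,'v,'c) st" where
  "restart \<sigma> c x = start_ph1 (\<sigma>\<lparr> ccv := (ccv \<sigma>)(c := max (ccv \<sigma> c) x) \<rparr>) c"

definition start_ph2 :: "('s::finite,'v,'c) st \<Rightarrow> 'c \<Rightarrow> ('v,'c) reg \<Rightarrow> ('s,'v,'c) st" where
  "start_ph2 \<sigma> c r = \<sigma>\<lparr> cph := (cph \<sigma>)(c := 2), crid := (crid \<sigma>)(c := Suc (crid \<sigma> c)),
      crep := (crep \<sigma>)(c := {}), cwr := (cwr \<sigma>)(c := r),
      net := net \<sigma> + bcast (\<lambda>s. Req2 s c (Suc (crid \<sigma> c)) (ccv \<sigma> c) r) \<rparr>"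

definition cweight :: "('s,'v,'c) st \<Rightarrow> 'c \<Rightarrow> real" where
  "cweight \<sigma> c = (\<Sum>p\<in>crep \<sigma> c. fst (snd p))"

definition init_st :: "('v,'c) reg \<Rightarrow> ('v,'c) reg \<Rightarrow> ('s,'v,'c) st" where
  "init_st r0 r1 = \<lparr> scv = (\<lambda>_. 0), sreg = (\<lambda>_. r0), sen = (\<lambda>_. True), sfl = (\<lambda>_. False),
      ssu = (\<lambda>_ _. {}), crashed = {}, ccv = (\<lambda>_. 0), cop = (\<lambda>_. None), cph = (\<lambda>_. 1),
      crid = (\<lambda>_. 0), crep = (\<lambda>_. {}), cwr = (\<lambda>_. r1), net = {#} \<rparr>"

inductive step :: "nat \<Rightarrow> (nat \<Rightarrow> 's::finite \<Rightarrow> real)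
                   \<Rightarrow> ('s,'v,'c::linorder) st \<Rightarrow> ('s,'v,'c) st \<Rightarrow> bool"
  for f :: nat and w :: "nat \<Rightarrow> 's \<Rightarrow> real" where
  crash: "s \<notin> crashed \<sigma> \<Longrightarrow> card (insert s (crashed \<sigma>)) \<le> f \<Longrightarrow>
     step f w \<sigma> (\<sigma>\<lparr> crashed := insert s (crashed \<sigma>) \<rparr>)"
| timeout: "s \<notin> crashed \<sigma> \<Longrightarrow> \<not> sfl \<sigma> s \<Longrightarrow> step f w \<sigma> (handle_cv \<sigma> s)"
| recv_cv: "ChangeView s x \<in># net \<sigma> \<Longrightarrow> s \<notin> crashed \<sigma> \<Longrightarrow> x = Suc (scv \<sigma> s) \<Longrightarrow>
     \<not> sfl \<sigma> s \<Longrightarrow>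
     step f w \<sigma> (handle_cv (\<sigma>\<lparr> net := net \<sigma> - {#ChangeView s x#} \<rparr>) s)"
| recv_cv_ign: "ChangeView s x \<in># net \<sigma> \<Longrightarrow> s \<notin> crashed \<sigma> \<Longrightarrow>
     x \<le> scv \<sigma> s \<or> (x = Suc (scv \<sigma> s) \<and> sfl \<sigma> s) \<Longrightarrow>
     step f w \<sigma> (\<sigma>\<lparr> net := net \<sigma> - {#ChangeView s x#} \<rparr>)"
| recv_su: "StateUpdate s t r x \<in># net \<sigma> \<Longrightarrow> s \<notin> crashed \<sigma> \<Longrightarrow>
     step f w \<sigma> (\<sigma>\<lparr> net := net \<sigma> - {#StateUpdate s t r x#},
                     ssu := (ssu \<sigma>)(s := (ssu \<sigma> s)(x := insert (t, r) (ssu \<sigma> s x))) \<rparr>)"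
| install: "s \<notin> crashed \<sigma> \<Longrightarrow> sfl \<sigma> s \<Longrightarrow>
     (\<Sum>t\<in>fst ` ssu \<sigma> s (scv \<sigma> s). w (scv \<sigma> s) t) > real (card (UNIV :: 's set)) / 2 \<Longrightarrow>
     r \<in> snd ` ssu \<sigma> s (scv \<sigma> s) \<Longrightarrow>
     (\<forall>r'\<in>snd ` ssu \<sigma> s (scv \<sigma> s). key_le (key r') (key r)) \<Longrightarrow>
     step f w \<sigma> (\<sigma>\<lparr> sreg := (sreg \<sigma>)(s := r), scv := (scv \<sigma>)(s := Suc (scv \<sigma> s)),
                     sfl := (sfl \<sigma>)(s := False), sen := (sen \<sigma>)(s := True) \<rparr>)"
| recv_req1: "Req1 s c r x \<in># net \<sigma> \<Longrightarrow> s \<notin> crashed \<sigma> \<Longrightarrow> sen \<sigma> s \<Longrightarrow>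
     step f w \<sigma> (\<sigma>\<lparr> net := net \<sigma> - {#Req1 s c r x#}
        + {#Rep1 c s r (scv \<sigma> s) (if scv \<sigma> s = x then Some (w x s) else None) (sreg \<sigma> s)#} \<rparr>)"
| recv_req2: "Req2 s c r x rg \<in># net \<sigma> \<Longrightarrow> s \<notin> crashed \<sigma> \<Longrightarrow> sen \<sigma> s \<Longrightarrow>
     step f w \<sigma> (\<sigma>\<lparr> net := net \<sigma> - {#Req2 s c r x rg#}
        + {#Rep2 c s r (scv \<sigma> s) (if scv \<sigma> s = x then Some (w x s) else None)#},
        sreg := (sreg \<sigma>)(s := (if scv \<sigma> s = x \<and> key_less (key (sreg \<sigma> s)) (key rg)
                                 then rg else sreg \<sigma> s)) \<rparr>)"
| invoke: "cop \<sigma> c = None \<Longrightarrow>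
     step f w \<sigma> (start_ph1 (\<sigma>\<lparr> cop := (cop \<sigma>)(c := Some oper) \<rparr>) c)"
| rep1_coll: "Rep1 c s r x wo rg \<in># net \<sigma> \<Longrightarrow> cop \<sigma> c \<noteq> None \<Longrightarrow> cph \<sigma> c = 1 \<Longrightarrow>
     r = crid \<sigma> c \<Longrightarrow> x = ccv \<sigma> c \<Longrightarrow> wo = Some wt \<Longrightarrow>
     \<sigma>1 = \<sigma>\<lparr> net := net \<sigma> - {#Rep1 c s r x wo rg#},
              crep := (crep \<sigma>)(c := insert (s, wt, rg) (crep \<sigma> c)) \<rparr> \<Longrightarrow>
     \<not> (cweight \<sigma>1 c > real (card (UNIV :: 's set)) / 2) \<Longrightarrow>
     step f w \<sigma> \<sigma>1"
| rep1_fin: "Rep1 c s r x wo rg \<in># net \<sigma> \<Longrightarrow> cop \<sigma> c = Some oper \<Longrightarrow> cph \<sigma> c = 1 \<Longrightarrow>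
     r = crid \<sigma> c \<Longrightarrow> x = ccv \<sigma> c \<Longrightarrow> wo = Some wt \<Longrightarrow>
     \<sigma>1 = \<sigma>\<lparr> net := net \<sigma> - {#Rep1 c s r x wo rg#},
              crep := (crep \<sigma>)(c := insert (s, wt, rg) (crep \<sigma> c)) \<rparr> \<Longrightarrow>
     cweight \<sigma>1 c > real (card (UNIV :: 's set)) / 2 \<Longrightarrow>
     rm \<in> (\<lambda>p. snd (snd p)) ` crep \<sigma>1 c \<Longrightarrow>
     (\<forall>r'\<in>(\<lambda>p. snd (snd p)) ` crep \<sigma>1 c. key_le (key r') (key rm)) \<Longrightarrow>
     nr = (case oper of Read \<Rightarrow> rm | Write val \<Rightarrow> (val, Suc (fst (snd rm)), c)) \<Longrightarrow>
     step f w \<sigma> (start_ph2 \<sigma>1 c nr)"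
| rep1_view: "Rep1 c s r x wo rg \<in># net \<sigma> \<Longrightarrow> cop \<sigma> c \<noteq> None \<Longrightarrow> cph \<sigma> c = 1 \<Longrightarrow>
     r = crid \<sigma> c \<Longrightarrow> x \<noteq> ccv \<sigma> c \<Longrightarrow>
     step f w \<sigma> (restart (\<sigma>\<lparr> net := net \<sigma> - {#Rep1 c s r x wo rg#} \<rparr>) c x)"
| rep1_stale: "Rep1 c s r x wo rg \<in># net \<sigma> \<Longrightarrow> \<not> (cop \<sigma> c \<noteq> None \<and> cph \<sigma> c = 1 \<and> r = crid \<sigma> c) \<Longrightarrow>
     step f w \<sigma> (\<sigma>\<lparr> net := net \<sigma> - {#Rep1 c s r x wo rg#} \<rparr>)"
| rep2_coll: "Rep2 c s r x wo \<in># net \<sigma> \<Longrightarrow> cop \<sigma> c \<noteq> None \<Longrightarrow> cph \<sigma> c = 2 \<Longrightarrow>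
     r = crid \<sigma> c \<Longrightarrow> x = ccv \<sigma> c \<Longrightarrow> wo = Some wt \<Longrightarrow>
     \<sigma>1 = \<sigma>\<lparr> net := net \<sigma> - {#Rep2 c s r x wo#},
              crep := (crep \<sigma>)(c := insert (s, wt, cwr \<sigma> c) (crep \<sigma> c)) \<rparr> \<Longrightarrow>
     \<not> (cweight \<sigma>1 c > real (card (UNIV :: 's set)) / 2) \<Longrightarrow>
     step f w \<sigma> \<sigma>1"
| rep2_fin: "Rep2 c s r x wo \<in># net \<sigma> \<Longrightarrow> cop \<sigma> c \<noteq> None \<Longrightarrow> cph \<sigma> c = 2 \<Longrightarrow>
     r = crid \<sigma> c \<Longrightarrow> x = ccv \<sigma> c \<Longrightarrow> wo = Some wt \<Longrightarrow>
     \<sigma>1 = \<sigma>\<lparr> net := net \<sigma> - {#Rep2 c s r x wo#},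
              crep := (crep \<sigma>)(c := insert (s, wt, cwr \<sigma> c) (crep \<sigma> c)) \<rparr> \<Longrightarrow>
     cweight \<sigma>1 c > real (card (UNIV :: 's set)) / 2 \<Longrightarrow>
     step f w \<sigma> (\<sigma>1\<lparr> cop := (cop \<sigma>1)(c := None) \<rparr>)"
| rep2_view: "Rep2 c s r x wo \<in># net \<sigma> \<Longrightarrow> cop \<sigma> c \<noteq> None \<Longrightarrow> cph \<sigma> c = 2 \<Longrightarrow>
     r = crid \<sigma> c \<Longrightarrow> x \<noteq> ccv \<sigma> c \<Longrightarrow>
     step f w \<sigma> (restart (\<sigma>\<lparr> net := net \<sigma> - {#Rep2 c s r x wo#} \<rparr>) c x)"
| rep2_stale: "Rep2 c s r x wo \<in># net \<sigma> \<Longrightarrow> \<not> (cop \<sigma> c \<noteq> None \<and> cph \<sigma> c = 2 \<and> r = crid \<sigma> c) \<Longrightarrow>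
     step f w \<sigma> (\<sigma>\<lparr> net := net \<sigma> - {#Rep2 c s r x wo#} \<rparr>)"

text \<open>lastview: the last view installed in the system, i.e. the view some server installed
  (or v0) such that no server has a larger current view; since current views change only
  by installing the successor view, this is the largest current view of any server.\<close>
definition lastview :: "('s::finite,'v,'c) st \<Rightarrow> nat" where
  "lastview \<sigma> = Max (range (scv \<sigma>))"

definition execution :: "nat \<Rightarrow> (nat \<Rightarrow> 's::finite \<Rightarrow> real) \<Rightarrow> ('v,'c) reg \<Rightarrow> ('v,'c) reg
     \<Rightarrow> (nat \<Rightarrow> ('s,'v,'c::linorder) st) \<Rightarrow> nat \<Rightarrow> bool" where
  "execution f w r0 r1 \<sigma> N \<longleftrightarrow> \<sigma> 0 = init_st r0 r1 \<and> (\<forall>i<N. step f w (\<sigma> i) (\<sigma> (Suc i)))"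

end

theory Submission imports Defs begin

lemma in_sum_single: "finite A \<Longrightarrow> x \<in># (\<Sum>s\<in>A. {#g s#}) \<longleftrightarrow> (\<exists>s\<in>A. x = g s)"
  by (induct rule: finite_induct) auto

lemma in_bcast[simp]: "x \<in># bcast g \<longleftrightarrow> (\<exists>s. x = g s)"
  unfolding bcast_def by (simp add: in_sum_single)

lemma in_diff_neq[simp]: "x \<noteq> y \<Longrightarrow> x \<in># M - {#y#} \<longleftrightarrow> x \<in># M"
  by (auto simp: in_diff_count)

lemma in_diffD2: "x \<in># A + B - C \<Longrightarrow> x \<in># A \<or> x \<in># B"
  by (auto dest: in_diffD)

definition Qset :: "('s,'v,'c) st \<Rightarrow> nat \<Rightarrow> 's set" where
  "Qset \<sigma> v = {t. v < scv \<sigma> t \<or> (v = scv \<sigma> t \<and> sfl \<sigma> t)}"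

lemma in_Qset[simp]: "t \<in> Qset \<sigma> v \<longleftrightarrow> v < scv \<sigma> t \<or> (v = scv \<sigma> t \<and> sfl \<sigma> t)"
  by (simp add: Qset_def)

lemma step_mono:
  "step f w \<sigma> \<sigma>' \<Longrightarrow> scv \<sigma> s \<le> scv \<sigma>' s \<and> Qset \<sigma> v \<subseteq> Qset \<sigma>' v"
  by (induction rule: step.induct)
     (auto simp: handle_cv_def start_ph1_def start_ph2_def restart_def)

lemma wpos: "weights_ok f w \<Longrightarrow> 0 < w v s"
proof -
  assume a: "weights_ok f w"
  let ?n = "real (card (UNIV::'a set))"
  have h: "2 * f + 1 \<le> card (UNIV :: 'a set)" and b: "?n / (2 * (?n - real f)) < w v s"
    using a unfolding weights_ok_def by auto
  from h have "?n - real f > 0" by linarith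
  moreover have "?n \<ge> 0" by simp
  ultimately have "?n / (2 * (?n - real f)) \<ge> 0" by simp
  with b show ?thesis by linarith
qed

fun msg_ok :: "('s,'v,'c) st \<Rightarrow> ('s,'v,'c) msg \<Rightarrow> bool" where
  "msg_ok \<sigma> (StateUpdate d t r v) = (t \<in> Qset \<sigma> v)"
| "msg_ok \<sigma> (Rep1 c s r v wo rg) = (v \<le> scv \<sigma> s)"
| "msg_ok \<sigma> (Rep2 c s r v wo) = (v \<le> scv \<sigma> s \<and> r \<le> crid \<sigma> c)"
| "msg_ok \<sigma> (Req2 s c r v rg) = (r \<le> crid \<sigma> c)"
| "msg_ok \<sigma> _ = True"

definition I1 :: "('s,'v,'c) st \<Rightarrow> bool" where
  "I1 \<sigma> \<longleftrightarrow> (\<forall>t. sfl \<sigma> t \<longrightarrow> \<not> sen \<sigma> t)"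
definition I2 :: "('s,'v,'c) st \<Rightarrow> bool" where
  "I2 \<sigma> \<longleftrightarrow> (\<forall>s v t r. (t,r) \<in> ssu \<sigma> s v \<longrightarrow> t \<in> Qset \<sigma> v)"
definition I4 :: "(nat \<Rightarrow> 's::finite \<Rightarrow> real) \<Rightarrow> ('s,'v,'c) st \<Rightarrow> bool" where
  "I4 w \<sigma> \<longleftrightarrow> (\<forall>s v. v < scv \<sigma> s \<longrightarrow> real (card (UNIV::'s set)) / 2 < sum (w v) (Qset \<sigma> v))"
definition I5 :: "('s,'v,'c) st \<Rightarrow> bool" where
  "I5 \<sigma> \<longleftrightarrow> (\<forall>c. \<exists>s. ccv \<sigma> c \<le> scv \<sigma> s)"
definition I6 :: "('s,'v,'c) st \<Rightarrow> bool" where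
  "I6 \<sigma> \<longleftrightarrow> (\<forall>m. m \<in># net \<sigma> \<longrightarrow> msg_ok \<sigma> m)"

definition sinv :: "(nat \<Rightarrow> 's::finite \<Rightarrow> real) \<Rightarrow> ('s,'v,'c) st \<Rightarrow> bool" where
  "sinv w \<sigma> \<longleftrightarrow> I1 \<sigma> \<and> I2 \<sigma> \<and> I4 w \<sigma> \<and> I5 \<sigma> \<and> I6 \<sigma>"

lemma sum_Q_mono:
  assumes "weights_ok f w" "Qset \<sigma> v \<subseteq> Qset \<sigma>' v"
  shows "sum (w v) (Qset \<sigma> v) \<le> sum (w v) (Qset \<sigma>' v)"
  by (rule sum_mono2) (use assms wpos[OF assms(1)] in \<open>auto intro: less_imp_le\<close>)

lemma inv_init: "sinv w (init_st r0 r1)"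
  by (simp add: sinv_def I1_def I2_def I4_def I5_def I6_def init_st_def)

lemma crid_mono: "step f w \<sigma> \<sigma>' \<Longrightarrow> crid \<sigma> c \<le> crid \<sigma>' c"
  by (induction rule: step.induct)
     (auto simp: handle_cv_def start_ph1_def start_ph2_def restart_def)

lemma msg_ok_step: "step f w \<sigma> \<sigma>' \<Longrightarrow> msg_ok \<sigma> m \<Longrightarrow> msg_ok \<sigma>' m"
proof -
  assume st: "step f w \<sigma> \<sigma>'" and ok: "msg_ok \<sigma> m"
  have a: "\<And>s. scv \<sigma> s \<le> scv \<sigma>' s" "\<And>v. Qset \<sigma> v \<subseteq> Qset \<sigma>' v" "\<And>c. crid \<sigma> c \<le> crid \<sigma>' c"
    using step_mono[OF st] crid_mono[OF st] by auto
  show ?thesis using ok a by (cases m) (auto simp del: in_Qset intro: le_trans)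
qed

lemmas step_defs = handle_cv_def start_ph1_def start_ph2_def restart_def

lemma I1_step: "step f w \<sigma> \<sigma>' \<Longrightarrow> I1 \<sigma> \<Longrightarrow> I1 \<sigma>'"
  by (induction rule: step.induct) (auto simp: I1_def step_defs)

lemma I6_step:
  assumes st: "step f w \<sigma> \<sigma>'" and i6: "I6 \<sigma>"
  shows "I6 \<sigma>'"
proof -
  have old: "\<And>m. m \<in># net \<sigma> \<Longrightarrow> msg_ok \<sigma>' m" using i6 msg_ok_step[OF st] unfolding I6_def by blast
  have oldm: "\<And>m. m \<in># net \<sigma> \<Longrightarrow> msg_ok \<sigma> m" using i6 unfolding I6_def by blast
  from st show ?thesis
  proof cases
    case (recv_req2 s c r x rg)
    have "msg_ok \<sigma> (Req2 s c r x rg)" using oldm recv_req2 by blast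
    then show ?thesis using recv_req2 unfolding I6_def
      by (auto dest: old old[OF in_diffD] in_diffD2 simp del: in_Qset)
  qed (use old in \<open>auto simp: I6_def step_defs dest!: in_diffD\<close>)
qed

lemma I2_step:
  assumes st: "step f w \<sigma> \<sigma>'" and i2: "I2 \<sigma>" and i6: "I6 \<sigma>"
  shows "I2 \<sigma>'"
proof -
  have old: "\<And>s v t r. (t,r) \<in> ssu \<sigma> s v \<Longrightarrow> t \<in> Qset \<sigma>' v" using i2 step_mono[OF st] unfolding I2_def by blast
  have oldm: "\<And>m. m \<in># net \<sigma> \<Longrightarrow> msg_ok \<sigma>' m" using i6 msg_ok_step[OF st] unfolding I6_def by blast
  from st show ?thesis
  proof cases
    case (recv_su s t r x)
    have "t \<in> Qset \<sigma>' x" using oldm[OF recv_su(2)] by simp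
    then show ?thesis using recv_su unfolding I2_def
      by (auto dest: old simp del: in_Qset)
  qed (auto simp: I2_def step_defs dest: old simp del: in_Qset)
qed

lemma I5_step:
  assumes st: "step f w \<sigma> \<sigma>'" and i5: "I5 \<sigma>" and i6: "I6 \<sigma>"
  shows "I5 \<sigma>'"
proof -
  have old: "\<And>c. \<exists>s. ccv \<sigma> c \<le> scv \<sigma>' s" using i5 step_mono[OF st] unfolding I5_def by (meson le_trans)
  have oldm: "\<And>m. m \<in># net \<sigma> \<Longrightarrow> msg_ok \<sigma>' m" using i6 msg_ok_step[OF st] unfolding I6_def by blast
  have gen: "ccv \<sigma>' = ccv \<sigma> \<Longrightarrow> I5 \<sigma>'" using old unfolding I5_def by simp
  have rs: "I5 \<sigma>'" if e: "ccv \<sigma>' = (ccv \<sigma>)(c := max (ccv \<sigma> c) x)" and xs: "x \<le> scv \<sigma>' s" for c x s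
    unfolding I5_def
  proof
    fix c'
    show "\<exists>s. ccv \<sigma>' c' \<le> scv \<sigma>' s"
    proof (cases "c' = c")
      case True
      obtain s0 where s0: "ccv \<sigma> c \<le> scv \<sigma>' s0" using old by blast
      show ?thesis
      proof (cases "ccv \<sigma> c \<le> x")
        case True
        then show ?thesis using \<open>c' = c\<close> e xs by (auto simp: max_def)
      next
        case False
        then show ?thesis using \<open>c' = c\<close> e s0 by (auto simp: max_def)
      qed
    next
      case False
      then show ?thesis using e old by simp
    qed
  qed
  from st show ?thesis
  proof cases
    case (rep1_view c s r x wo rg)
    have "x \<le> scv \<sigma>' s" using oldm[OF rep1_view(2)] by simp
    moreover have "ccv \<sigma>' = (ccv \<sigma>)(c := max (ccv \<sigma> c) x)" using rep1_view by (simp add: step_defs)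
    ultimately show ?thesis using rs by blast
  next
    case (rep2_view c s r x wo)
    have "x \<le> scv \<sigma>' s" using oldm[OF rep2_view(2)] by simp
    moreover have "ccv \<sigma>' = (ccv \<sigma>)(c := max (ccv \<sigma> c) x)" using rep2_view by (simp add: step_defs)
    ultimately show ?thesis using rs by blast
  qed (rule gen, simp add: step_defs)+
qed

lemma I4_step:
  fixes \<sigma> \<sigma>' :: "('s::finite,'v,'c::linorder) st"
  assumes st: "step f w \<sigma> \<sigma>'" and wok: "weights_ok f w" and i4: "I4 w \<sigma>" and i2: "I2 \<sigma>"
  shows "I4 w \<sigma>'"
proof -
  have m2: "\<And>v. Qset \<sigma> v \<subseteq> Qset \<sigma>' v" using step_mono[OF st] by blast
  have old: "\<And>s v. v < scv \<sigma> s \<Longrightarrow> real (card (UNIV::'s set)) / 2 < sum (w v) (Qset \<sigma>' v)"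
    using i4 sum_Q_mono[OF wok m2] unfolding I4_def by (meson less_le_trans)
  from st show ?thesis
  proof cases
    case (install s r)
    have ss: "fst ` ssu \<sigma> s (scv \<sigma> s) \<subseteq> Qset \<sigma>' (scv \<sigma> s)"
    proof
      fix t assume "t \<in> fst ` ssu \<sigma> s (scv \<sigma> s)"
      then obtain r where "(t, r) \<in> ssu \<sigma> s (scv \<sigma> s)" by force
      then show "t \<in> Qset \<sigma>' (scv \<sigma> s)" using i2 m2 unfolding I2_def by blast
    qed
    have "sum (w (scv \<sigma> s)) (fst ` ssu \<sigma> s (scv \<sigma> s)) \<le> sum (w (scv \<sigma> s)) (Qset \<sigma>' (scv \<sigma> s))"
      by (rule sum_mono2[OF _ ss]) (use wpos[OF wok] in \<open>auto intro: less_imp_le\<close>)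
    with install have new: "real (card (UNIV::'s set)) / 2 < sum (w (scv \<sigma> s)) (Qset \<sigma>' (scv \<sigma> s))"
      by linarith
    show ?thesis unfolding I4_def
    proof (intro allI impI)
      fix s' v assume a: "v < scv \<sigma>' s'"
      show "real (card (UNIV::'s set)) / 2 < sum (w v) (Qset \<sigma>' v)"
      proof (cases "v < scv \<sigma> s'")
        case True
        then show ?thesis using old by blast
      next
        case False
        with a install have "s' = s" "v = scv \<sigma> s" by (auto split: if_splits)
        then show ?thesis using new by simp
      qed
    qed
  qed (use old in \<open>auto simp: I4_def step_defs simp del: in_Qset\<close>)
qed

lemma inv_step:
  fixes \<sigma> \<sigma>' :: "('s::finite,'v,'c::linorder) st"
  assumes st: "step f w \<sigma> \<sigma>'" and wok: "weights_ok f w" and iv: "sinv w \<sigma>"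
  shows "sinv w \<sigma>'"
  using iv I1_step[OF st] I2_step[OF st] I4_step[OF st wok] I5_step[OF st] I6_step[OF st]
  unfolding sinv_def by blast


lemma fin_step:
  fixes \<sigma> \<sigma>' :: "('s::finite,'v,'c::linorder) st"
  assumes st: "step f w \<sigma> \<sigma>'" and a: "cop \<sigma> c \<noteq> None" and b: "cop \<sigma>' c = None"
  shows "\<exists>s wt. Rep2 c s (crid \<sigma> c) (ccv \<sigma> c) (Some wt) \<in># net \<sigma> \<and> cph \<sigma> c = 2 \<and>
     real (card (UNIV::'s set)) / 2 < (\<Sum>p\<in>insert (s, wt, cwr \<sigma> c) (crep \<sigma> c). fst (snd p))"
  using st
proof cases
  case (rep2_fin c' s r x wo wt \<sigma>1)
  show ?thesis
  proof (cases "c' = c")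
    case True
    have "Rep2 c s (crid \<sigma> c) (ccv \<sigma> c) (Some wt) \<in># net \<sigma> \<and> cph \<sigma> c = 2 \<and>
      real (card (UNIV::'s set)) / 2 < (\<Sum>p\<in>insert (s, wt, cwr \<sigma> c) (crep \<sigma> c). fst (snd p))"
      using rep2_fin True by (auto simp: cweight_def)
    then show ?thesis by blast
  next
    case False
    then show ?thesis using rep2_fin a b by auto
  qed
qed (use a b in \<open>auto simp: step_defs split: if_splits\<close>)

definition Pk :: "'c \<Rightarrow> nat \<Rightarrow> ('s,'v,'c) st \<Rightarrow> bool" where
  "Pk c R \<sigma> \<longleftrightarrow> cop \<sigma> c \<noteq> None \<and> cph \<sigma> c = 2 \<and> crid \<sigma> c = R"

lemma start_step:
  assumes st: "step f w \<sigma> \<sigma>'" and i6: "I6 \<sigma>" and np: "\<not> Pk c R \<sigma>" and p: "Pk c R \<sigma>'"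
  shows "crep \<sigma>' c = {} \<and> (\<forall>s v wo. Rep2 c s R v wo \<notin># net \<sigma>')"
proof -
  have oldm: "\<And>m. m \<in># net \<sigma> \<Longrightarrow> msg_ok \<sigma> m" using i6 unfolding I6_def by blast
  have same: "False" if "cop \<sigma>' c = cop \<sigma> c" "cph \<sigma>' c = cph \<sigma> c" "crid \<sigma>' c = crid \<sigma> c"
    using that np p unfolding Pk_def by simp
  from st show ?thesis
  proof cases
    case (rep1_fin c' s r x wo rg oper wt \<sigma>1 rm nr)
    show ?thesis
    proof (cases "c' = c")
      case True
      have R: "R = Suc (crid \<sigma> c)" using p rep1_fin True by (simp add: Pk_def step_defs)
      have "Rep2 c s' R v wo' \<notin># net \<sigma>'" for s' v wo'
      proof
        assume "Rep2 c s' R v wo' \<in># net \<sigma>'"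
        then have "Rep2 c s' R v wo' \<in># net \<sigma>" using rep1_fin by (auto simp: step_defs dest!: in_diffD)
        then show False using oldm R by fastforce
      qed
      then show ?thesis using rep1_fin True by (simp add: step_defs)
    next
      case False
      then show ?thesis using rep1_fin same by (simp add: step_defs)
    qed
  next
    case (invoke c' oper)
    then show ?thesis using same p by (cases "c' = c") (auto simp: step_defs Pk_def)
  next
    case (rep1_view c' s r x wo rg)
    then show ?thesis using same p by (cases "c' = c") (auto simp: step_defs Pk_def)
  next
    case (rep2_view c' s r x wo)
    then show ?thesis using same p by (cases "c' = c") (auto simp: step_defs Pk_def)
  next
    case (rep2_fin c' s r x wo wt \<sigma>1)
    then show ?thesis using same p by (cases "c' = c") (auto simp: step_defs Pk_def)
  qed (use same in \<open>auto simp: step_defs\<close>)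
qed

definition loc :: "(nat \<Rightarrow> 's \<Rightarrow> real) \<Rightarrow> 'c \<Rightarrow> nat \<Rightarrow> nat \<Rightarrow> ('v,'c) reg \<Rightarrow> 's set \<Rightarrow> ('s,'v,'c) st \<Rightarrow> bool" where
  "loc w c R x cw B \<sigma> \<longleftrightarrow> Pk c R \<sigma> \<and> ccv \<sigma> c = x \<and> cwr \<sigma> c = cw
     \<and> (\<forall>p\<in>crep \<sigma> c. fst (snd p) = w x (fst p) \<and> snd (snd p) = cw \<and> fst p \<notin> B)
     \<and> (\<forall>s wt. Rep2 c s R x (Some wt) \<in># net \<sigma> \<longrightarrow> wt = w x s \<and> s \<notin> B)
     \<and> B \<subseteq> Qset \<sigma> x"

lemma loc_step:
  assumes st: "step f w \<sigma> \<sigma>'" and i1: "I1 \<sigma>" and l: "loc w c R x cw B \<sigma>" and p: "Pk c R \<sigma>'"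
  shows "loc w c R x cw B \<sigma>'"
proof -
  have m2: "Qset \<sigma> x \<subseteq> Qset \<sigma>' x" using step_mono[OF st] by blast
  have L: "Pk c R \<sigma>" "ccv \<sigma> c = x" "cwr \<sigma> c = cw"
     "\<And>p. p\<in>crep \<sigma> c \<Longrightarrow> fst (snd p) = w x (fst p) \<and> snd (snd p) = cw \<and> fst p \<notin> B"
     "\<And>s wt. Rep2 c s R x (Some wt) \<in># net \<sigma> \<Longrightarrow> wt = w x s \<and> s \<notin> B"
     "B \<subseteq> Qset \<sigma> x" using l unfolding loc_def by blast+
  have L1: "cop \<sigma> c \<noteq> None" "cph \<sigma> c = 2" "crid \<sigma> c = R" using L(1) unfolding Pk_def by auto
  have B': "B \<subseteq> Qset \<sigma>' x" using L(6) m2 by blast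
  have same': "loc w c R x cw B \<sigma>'" if a: "ccv \<sigma>' c = ccv \<sigma> c" "cwr \<sigma>' c = cwr \<sigma> c"
     "\<And>p. p\<in>crep \<sigma>' c \<Longrightarrow> fst (snd p) = w x (fst p) \<and> snd (snd p) = cw \<and> fst p \<notin> B"
     "\<And>s wt. Rep2 c s R x (Some wt) \<in># net \<sigma>' \<Longrightarrow> wt = w x s \<and> s \<notin> B"
    unfolding loc_def
  proof (intro conjI)
    show "Pk c R \<sigma>'" by (rule p)
    show "ccv \<sigma>' c = x" using a(1) L(2) by simp
    show "cwr \<sigma>' c = cw" using a(2) L(3) by simp
    show "\<forall>p\<in>crep \<sigma>' c. fst (snd p) = w x (fst p) \<and> snd (snd p) = cw \<and> fst p \<notin> B" using a(3) by blast
    show "\<forall>s wt. Rep2 c s R x (Some wt) \<in># net \<sigma>' \<longrightarrow> wt = w x s \<and> s \<notin> B" using a(4) by blast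
    show "B \<subseteq> Qset \<sigma>' x" by (rule B')
  qed
  have same: "loc w c R x cw B \<sigma>'" if a: "ccv \<sigma>' c = ccv \<sigma> c" "cwr \<sigma>' c = cwr \<sigma> c" "crep \<sigma>' c = crep \<sigma> c"
     "\<And>s wt. Rep2 c s R x (Some wt) \<in># net \<sigma>' \<Longrightarrow> Rep2 c s R x (Some wt) \<in># net \<sigma>"
    using a(1,2) proof (rule same')
    show "\<And>p. p\<in>crep \<sigma>' c \<Longrightarrow> fst (snd p) = w x (fst p) \<and> snd (snd p) = cw \<and> fst p \<notin> B"
      using a(3) L(4) by simp
    show "\<And>s wt. Rep2 c s R x (Some wt) \<in># net \<sigma>' \<Longrightarrow> wt = w x s \<and> s \<notin> B"
      using a(4) L(5) by blast
  qed
  from st show ?thesis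
  proof cases
    case (recv_req2 s c' r x' rg)
    have sB: "s \<notin> B" if "scv \<sigma> s = x"
    proof
      assume "s \<in> B"
      then have "sfl \<sigma> s" using L(6) that by auto
      then show False using i1 recv_req2 unfolding I1_def by blast
    qed
    show ?thesis
    proof (rule same')
      show "ccv \<sigma>' c = ccv \<sigma> c" "cwr \<sigma>' c = cwr \<sigma> c" using recv_req2 by simp_all
      show "\<And>p. p\<in>crep \<sigma>' c \<Longrightarrow> fst (snd p) = w x (fst p) \<and> snd (snd p) = cw \<and> fst p \<notin> B"
        using recv_req2 L(4) by simp
      fix s0 wt assume m: "Rep2 c s0 R x (Some wt) \<in># net \<sigma>'"
      then have "Rep2 c s0 R x (Some wt) \<in># net \<sigma> \<or>
        Rep2 c s0 R x (Some wt) = Rep2 c' s r (scv \<sigma> s) (if scv \<sigma> s = x' then Some (w x' s) else None)"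
        using recv_req2 by (auto split: if_splits)
      then show "wt = w x s0 \<and> s0 \<notin> B"
      proof
        assume "Rep2 c s0 R x (Some wt) \<in># net \<sigma>"
        then show ?thesis using L(5) by blast
      next
        assume e: "Rep2 c s0 R x (Some wt) = Rep2 c' s r (scv \<sigma> s) (if scv \<sigma> s = x' then Some (w x' s) else None)"
        then have "s0 = s" "scv \<sigma> s = x" "x' = x" "wt = w x s" by (auto split: if_splits)
        then show ?thesis using sB by simp
      qed
    qed
  next
    case (rep2_coll c' s r x' wo wt)
    show ?thesis
    proof (cases "c' = c")
      case True
      have "wt = w x s \<and> s \<notin> B" using L(5) rep2_coll True L1 L(2) by auto
      show ?thesis
      proof (rule same')
        show "ccv \<sigma>' c = ccv \<sigma> c" "cwr \<sigma>' c = cwr \<sigma> c" using rep2_coll by simp_all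
        show "\<And>p. p\<in>crep \<sigma>' c \<Longrightarrow> fst (snd p) = w x (fst p) \<and> snd (snd p) = cw \<and> fst p \<notin> B"
          using rep2_coll True L(4) L(3) \<open>wt = w x s \<and> s \<notin> B\<close> by auto
        show "\<And>s wt. Rep2 c s R x (Some wt) \<in># net \<sigma>' \<Longrightarrow> wt = w x s \<and> s \<notin> B"
          using rep2_coll L(5) by (auto dest: in_diffD)
      qed
    next
      case False
      show ?thesis by (rule same) (use rep2_coll False in \<open>auto dest: in_diffD\<close>)
    qed
  next
    case (invoke c' oper)
    show ?thesis
    proof (cases "c' = c")
      case True then show ?thesis using invoke L1 by simp
    next
      case False show ?thesis by (rule same) (use invoke False in \<open>auto simp: step_defs\<close>)
    qed
  next
    case (rep1_coll c' s r x' wo rg wt)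
    show ?thesis
    proof (cases "c' = c")
      case True then show ?thesis using rep1_coll L1 by simp
    next
      case False show ?thesis by (rule same) (use rep1_coll False in \<open>auto dest: in_diffD\<close>)
    qed
  next
    case (rep1_fin c' s r x' wo rg oper wt \<sigma>1 rm nr)
    show ?thesis
    proof (cases "c' = c")
      case True then show ?thesis using rep1_fin L1 by simp
    next
      case False show ?thesis by (rule same) (use rep1_fin False in \<open>auto simp: step_defs dest: in_diffD\<close>)
    qed
  next
    case (rep1_view c' s r x' wo rg)
    show ?thesis
    proof (cases "c' = c")
      case True then show ?thesis using rep1_view L1 by simp
    next
      case False show ?thesis by (rule same) (use rep1_view False in \<open>auto simp: step_defs dest: in_diffD\<close>)
    qed
  next
    case (rep2_view c' s r x' wo)
    show ?thesis
    proof (cases "c' = c")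
      case True then have "cph \<sigma>' c = 1" using rep2_view by (simp add: step_defs)
      then show ?thesis using p unfolding Pk_def by simp
    next
      case False show ?thesis by (rule same) (use rep2_view False in \<open>auto simp: step_defs dest: in_diffD\<close>)
    qed
  next
    case (rep2_fin c' s r x' wo wt \<sigma>1)
    show ?thesis
    proof (cases "c' = c")
      case True then have "cop \<sigma>' c = None" using rep2_fin by simp
      then show ?thesis using p unfolding Pk_def by simp
    next
      case False show ?thesis by (rule same) (use rep2_fin False in \<open>auto dest: in_diffD\<close>)
    qed
  qed (rule same; auto simp: step_defs dest: in_diffD)+
qed


lemma lastview_ge: "scv \<sigma> s \<le> lastview (\<sigma> :: ('s::finite,'v,'c) st)"
  unfolding lastview_def by (rule Max_ge) auto

lemma lastview_in: "\<exists>s. lastview (\<sigma> :: ('s::finite,'v,'c) st) = scv \<sigma> s"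
proof -
  have "lastview \<sigma> \<in> range (scv \<sigma>)" unfolding lastview_def by (rule Max_in) auto
  then show ?thesis by auto
qed

theorem lemma8:
  fixes f :: nat and w :: "nat \<Rightarrow> 's::finite \<Rightarrow> real"
    and \<sigma> :: "nat \<Rightarrow> ('s, 'v, 'c::linorder) st"
  assumes "weights_ok f w"
    and "execution f w r0 r1 \<sigma> N"
    and "i < N"
    and "cop (\<sigma> i) c \<noteq> None" and "cop (\<sigma> (Suc i)) c = None"
  shows "\<exists>j\<le>i. (\<forall>k\<in>{j..i}. cop (\<sigma> k) c \<noteq> None \<and> cph (\<sigma> k) c = 2
                            \<and> crid (\<sigma> k) c = crid (\<sigma> i) c)
              \<and> lastview (\<sigma> j) = ccv (\<sigma> i) c"
proof -
  note wok = assms(1)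
  have s0: "\<sigma> 0 = init_st r0 r1" and steps: "\<And>k. k < N \<Longrightarrow> step f w (\<sigma> k) (\<sigma> (Suc k))"
    using assms(2) unfolding execution_def by auto
  have inv: "sinv w (\<sigma> k)" if "k \<le> N" for k
    using that
  proof (induction k)
    case 0 then show ?case using s0 inv_init by simp
  next
    case (Suc k) then show ?case using inv_step[OF steps wok] by simp
  qed
  define R where "R = crid (\<sigma> i) c"
  obtain s wt where fin: "Rep2 c s R (ccv (\<sigma> i) c) (Some wt) \<in># net (\<sigma> i)" "cph (\<sigma> i) c = 2"
    "real (card (UNIV::'s set)) / 2 < (\<Sum>p\<in>insert (s, wt, cwr (\<sigma> i) c) (crep (\<sigma> i) c). fst (snd p))"
    using fin_step[OF steps[OF assms(3)] assms(4,5)] unfolding R_def by blast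
  have Pi: "Pk c R (\<sigma> i)" using fin(2) assms(4) unfolding Pk_def R_def by simp
  define S where "S = {j. j \<le> i \<and> (\<forall>k\<in>{j..i}. Pk c R (\<sigma> k))}"
  have iS: "i \<in> S" using Pi unfolding S_def by auto
  have finS: "finite S" by (rule finite_subset[of _ "{..i}"]) (auto simp: S_def)
  define j0 where "j0 = Min S"
  have j0S: "j0 \<in> S" unfolding j0_def using finS iS Min_in by blast
  have j0i: "j0 \<le> i" and allP: "\<And>k. j0 \<le> k \<Longrightarrow> k \<le> i \<Longrightarrow> Pk c R (\<sigma> k)"
    using j0S unfolding S_def by auto
  have "\<not> Pk c R (\<sigma> 0)" using s0 unfolding Pk_def init_st_def by simp
  then have j0pos: "j0 > 0"
  proof (rule contrapos_np)
    assume "\<not> 0 < j0"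
    then have "j0 = 0" by simp
    then show "Pk c R (\<sigma> 0)" using allP[of 0] j0i by simp
  qed
  have notP: "\<not> Pk c R (\<sigma> (j0 - 1))"
  proof
    assume a: "Pk c R (\<sigma> (j0 - 1))"
    have "j0 - 1 \<in> S" unfolding S_def
    proof (intro CollectI conjI ballI)
      show "j0 - 1 \<le> i" using j0i by simp
      fix k assume "k \<in> {j0 - 1..i}"
      then show "Pk c R (\<sigma> k)" using a allP by (cases "k = j0 - 1") auto
    qed
    then have "j0 \<le> j0 - 1" unfolding j0_def using finS Min_le by blast
    then show False using j0pos by simp
  qed
  have stj: "step f w (\<sigma> (j0 - 1)) (\<sigma> j0)" using steps[of "j0 - 1"] j0pos j0i assms(3) by simp
  have invj: "sinv w (\<sigma> (j0 - 1))" using inv j0i assms(3) by simp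
  have start: "crep (\<sigma> j0) c = {} \<and> (\<forall>s v wo. Rep2 c s R v wo \<notin># net (\<sigma> j0))"
    using start_step[OF stj _ notP allP[OF le_refl j0i]] invj unfolding sinv_def by blast
  have goodk: "\<forall>k\<in>{j0..i}. cop (\<sigma> k) c \<noteq> None \<and> cph (\<sigma> k) c = 2 \<and> crid (\<sigma> k) c = crid (\<sigma> i) c"
  proof
    fix k assume "k \<in> {j0..i}"
    then have "Pk c R (\<sigma> k)" using allP by simp
    then show "cop (\<sigma> k) c \<noteq> None \<and> cph (\<sigma> k) c = 2 \<and> crid (\<sigma> k) c = crid (\<sigma> i) c"
      unfolding Pk_def R_def by simp
  qed
  show ?thesis
  proof (cases "lastview (\<sigma> j0) = ccv (\<sigma> i) c")
    case True
    then show ?thesis using goodk j0i by blast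
  next
    case False
    define x where "x = ccv (\<sigma> j0) c"
    define cw where "cw = cwr (\<sigma> j0) c"
    define B where "B = Qset (\<sigma> j0) x"
    have l0: "loc w c R x cw B (\<sigma> j0)"
      unfolding loc_def using allP[OF le_refl j0i] start unfolding x_def cw_def B_def by auto
    have lk: "loc w c R x cw B (\<sigma> (j0 + d))" if "j0 + d \<le> i" for d
      using that
    proof (induction d)
      case 0 then show ?case using l0 by simp
    next
      case (Suc d)
      have st: "step f w (\<sigma> (j0 + d)) (\<sigma> (Suc (j0 + d)))" using steps Suc.prems assms(3) by simp
      have "I1 (\<sigma> (j0 + d))" using inv[of "j0 + d"] Suc.prems assms(3) unfolding sinv_def by simp
      then show ?case using loc_step[OF st] Suc allP[of "Suc (j0 + d)"] by simp
    qed
    have li: "loc w c R x cw B (\<sigma> i)" using lk[of "i - j0"] j0i by simp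
    have xi: "ccv (\<sigma> i) c = x" and cwi: "cwr (\<sigma> i) c = cw"
      and crepi: "\<And>p. p \<in> crep (\<sigma> i) c \<Longrightarrow> fst (snd p) = w x (fst p) \<and> snd (snd p) = cw \<and> fst p \<notin> B"
      and rep2i: "\<And>s wt. Rep2 c s R x (Some wt) \<in># net (\<sigma> i) \<Longrightarrow> wt = w x s \<and> s \<notin> B"
      using li unfolding loc_def by blast+
    have invj0: "sinv w (\<sigma> j0)" using inv j0i assms(3) by simp
    obtain s0 where "x \<le> scv (\<sigma> j0) s0" using invj0 unfolding sinv_def I5_def x_def by blast
    then have "x \<le> lastview (\<sigma> j0)" using lastview_ge le_trans by blast
    with False xi have "x < lastview (\<sigma> j0)" by simp
    moreover obtain s1 where "lastview (\<sigma> j0) = scv (\<sigma> j0) s1" using lastview_in by blast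
    ultimately have xs1: "x < scv (\<sigma> j0) s1" by simp
    have "I4 w (\<sigma> j0)" using invj0 unfolding sinv_def by simp
    then have bigB: "real (card (UNIV::'s set)) / 2 < sum (w x) B"
      using xs1 unfolding I4_def B_def by blast
    define T where "T = insert (s, wt, cw) (crep (\<sigma> i) c)"
    have Tp: "\<And>p. p \<in> T \<Longrightarrow> fst (snd p) = w x (fst p) \<and> snd (snd p) = cw \<and> fst p \<notin> B"
      using crepi rep2i[OF fin(1)[unfolded xi]] unfolding T_def by auto
    have injT: "inj_on fst T"
    proof (rule inj_onI)
      fix p q assume "p \<in> T" "q \<in> T" "fst p = fst q"
      then show "p = q" using Tp[of p] Tp[of q] by (cases p, cases q) auto
    qed
    have "(\<Sum>p\<in>T. fst (snd p)) = (\<Sum>p\<in>T. w x (fst p))"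
      using Tp by (intro sum.cong) auto
    also have "\<dots> = sum (w x) (fst ` T)" using sum.reindex[OF injT, of "w x"] by simp
    also have "\<dots> \<le> sum (w x) (- B)"
      by (rule sum_mono2) (use Tp wpos[OF wok] in \<open>auto intro: less_imp_le\<close>)
    finally have le1: "(\<Sum>p\<in>T. fst (snd p)) \<le> sum (w x) (- B)" .
    have "sum (w x) B + sum (w x) (- B) = sum (w x) UNIV"
      using sum.union_disjoint[of B "- B" "w x"] by (simp add: Un_commute)
    also have "\<dots> \<le> real (card (UNIV::'s set))" using wok[unfolded weights_ok_def, THEN conjunct2, THEN conjunct2] by blast
    finally have "sum (w x) (- B) < real (card (UNIV::'s set)) / 2" using bigB by linarith
    moreover have "real (card (UNIV::'s set)) / 2 < (\<Sum>p\<in>T. fst (snd p))"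
      using fin(3) cwi unfolding T_def by simp
    ultimately show ?thesis using le1 by linarith
  qed
qed

end
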